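(* Let $N\ge1$, $1=a_0<a_1<\cdots<a_N$, $\mathbf a=(a_1,\dots,a_N)$. Then $$m(\mathbf{a})\le \frac{a_N}{\min_{0\le k<N}(a_{k+1}-a_k)}.$$
   Context: $m(\mathbf{a})=\min\{m\in\mathbb{N}: \sum_{k=0}^{N-1}(a_k/a_N)^m<1\}$, where $a_0=1$. *)

theory Defs
  imports Complex_Main
begin

text \<open>m(a) = min { m in N : sum_{k=0}^{N-1} (a_k / a_N)^m < 1 }, with a_0 = 1.
  The sequence is given as a function a :: nat => real, only a 0, ..., a N matter.\<close>
definition m_of :: "(nat \<Rightarrow> real) \<Rightarrow> nat \<Rightarrow> nat" where
  "m_of a N = (LEAST m::nat. (\<Sum>k<N. (a k / a N) ^ m) < 1)"

end

theory Submission
  imports Defs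
begin

lemma half_sum: "(\<Sum>i<n. (1/2::real)^(Suc i)) = 1 - (1/2)^n"
  by (induction n) auto

theorem mainTheorem3:
  fixes a :: "nat \<Rightarrow> real" and N :: nat
  assumes "N \<ge> 1"
    and "a 0 = 1"
    and "\<And>k. k < N \<Longrightarrow> a k < a (Suc k)"
  shows "real (m_of a N) \<le> a N / Min ((\<lambda>k. a (Suc k) - a k) ` {..<N})"
proof -
  define d where "d = Min ((\<lambda>k. a (Suc k) - a k) ` {..<N})"
  have ne: "(\<lambda>k. a (Suc k) - a k) ` {..<N} \<noteq> {}" using assms(1) by (auto simp: lessThan_empty_iff)
  have dpos: "d > 0" unfolding d_def using ne assms(3) by (subst Min_gr_iff) auto
  have dle: "d \<le> a (Suc k) - a k" if "k < N" for k
    unfolding d_def using that by (intro Min_le) auto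
  have up: "a k + real (j - k) * d \<le> a j" if "k \<le> j" "j \<le> N" for j k
    using that
  proof (induction j)
    case 0 then show ?case by simp
  next
    case (Suc j)
    show ?case
    proof (cases "k = Suc j")
      case True then show ?thesis by simp
    next
      case False
      then have "k \<le> j" using Suc by auto
      with Suc have IH: "a k + real (j - k) * d \<le> a j" by auto
      have "d \<le> a (Suc j) - a j" using dle Suc by auto
      moreover have "real (Suc j - k) = real (j - k) + 1" using \<open>k \<le> j\<close> by auto
      ultimately show ?thesis using IH by (simp add: algebra_simps)
    qed
  qed
  have ak: "a k \<ge> 1" if "k \<le> N" for k
  proof -
    have "0 \<le> real k * d" using dpos by simp
    then show ?thesis using up[of 0 k] that assms(2) by simp
  qed
  have aN: "a N \<ge> 1 + real N * d" using up[of 0 N] assms(2) by simp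
  define x where "x = a N / d"
  have xgt: "x > 1"
  proof -
    have "1 * d \<le> real N * d" using assms(1) dpos by (intro mult_right_mono) auto
    then have "a N > d" using aN by linarith
    then show ?thesis unfolding x_def using dpos by simp
  qed
  define m where "m = nat \<lfloor>x\<rfloor>"
  have mx: "real m \<le> x" "x < real m + 1" unfolding m_def using xgt by linarith+
  have m1: "m \<ge> 1" unfolding m_def using xgt by linarith
  define r where "r = 1 - 1/x"
  have r0: "0 < r" "r < 1" unfolding r_def using xgt by (auto simp: field_simps)
  define q where "q = r ^ m"
  have q0: "0 \<le> q" unfolding q_def using r0 by simp
  have qhalf: "q \<le> 1/2"
  proof -
    have "r \<le> real m / (real m + 1)" unfolding r_def using mx xgt m1
      by (auto simp: field_simps)
    then have qB: "q \<le> (real m / (real m + 1)) ^ m" unfolding q_def using r0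
      by (intro power_mono) auto
    moreover have "(1 + 1/real m) ^ m \<ge> 2"
    proof -
      have "1 + real m * (1/real m) \<le> (1 + 1/real m) ^ m"
        by (rule Bernoulli_inequality) (smt (verit) divide_nonneg_nonneg of_nat_0_le_iff)
      then show ?thesis using m1 by simp
    qed
    moreover have "(real m / (real m + 1)) ^ m * (1 + 1/real m) ^ m = 1"
    proof -
      have "real m > 0" using m1 by simp
      moreover have "1 + 1/real m = (real m + 1) / real m" using \<open>real m > 0\<close> by (simp add: field_simps)
      ultimately have "real m / (real m + 1) * (1 + 1/real m) = 1" by simp
      then show ?thesis by (metis power_mult_distrib power_one)
    qed
    moreover have "0 \<le> (real m / (real m + 1)) ^ m" by simp
    ultimately have "(real m / (real m + 1)) ^ m * 2 \<le> 1"
      by (metis mult_left_mono)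
    then show ?thesis using qB by linarith
  qed
  have trm: "(a k / a N) ^ m \<le> (1/2) ^ (N - k)" if "k < N" for k
  proof -
    have "a k \<le> a N - real (N - k) * d" using up[of k N] that by simp
    then have "a k / a N \<le> 1 - real (N - k) / x"
      unfolding x_def using aN dpos ak[of N] by (simp add: field_simps)
    also have "\<dots> \<le> r ^ (N - k)"
    proof -
      have "1 + real (N - k) * (- (1/x)) \<le> (1 + - (1/x)) ^ (N - k)"
        by (rule Bernoulli_inequality) (use xgt in auto)
      then show ?thesis unfolding r_def by simp
    qed
    finally have le: "a k / a N \<le> r ^ (N - k)" .
    have pos: "0 \<le> a k / a N" using ak[of k] ak[of N] that by simp
    have "(a k / a N) ^ m \<le> (r ^ (N - k)) ^ m" using le pos by (rule power_mono)
    also have "\<dots> = q ^ (N - k)" unfolding q_def by (simp add: power_mult[symmetric] mult.commute)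
    also have "\<dots> \<le> (1/2) ^ (N - k)" using q0 qhalf by (intro power_mono) auto
    finally show ?thesis .
  qed
  have "(\<Sum>k<N. (a k / a N) ^ m) \<le> (\<Sum>k<N. (1/2::real) ^ (N - k))"
    using trm by (intro sum_mono) auto
  also have "(\<Sum>k<N. (1/2::real) ^ (N - k)) = (\<Sum>i<N. (1/2::real)^(Suc i))"
  proof -
    have "(\<Sum>i<N. (1/2::real)^(Suc (N - Suc i))) = (\<Sum>i<N. (1/2::real)^(Suc i))"
      by (rule sum.nat_diff_reindex)
    moreover have "(\<Sum>i<N. (1/2::real)^(Suc (N - Suc i))) = (\<Sum>k<N. (1/2::real) ^ (N - k))"
      by (intro sum.cong) (auto simp: Suc_diff_Suc)
    ultimately show ?thesis by simp
  qed
  also have "\<dots> < 1" unfolding half_sum by simp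
  finally have "(\<Sum>k<N. (a k / a N) ^ m) < 1" .
  then have "m_of a N \<le> m" unfolding m_of_def by (rule Least_le)
  then have "real (m_of a N) \<le> x" using mx by linarith
  then show ?thesis unfolding x_def d_def .
qed

end
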